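(* Let $n=2k$. Let $g$ be a bent Boolean function on $\mathbb{F}_{2^n}$ whose dual $g^*$ satisfies property $(\mathbf{P}_\tau)$ with defining set $\{u_1,\ldots,u_\tau\}$, i.e. $u_1,\ldots,u_\tau\in\mathbb{F}_{2^n}$ are pairwise distinct and $D_{u_i}D_{u_j}g^*=0$ for all $1\le i<j\le\tau$. Let $F(X_1,\ldots,X_\tau)$ be any reduced polynomial in $\mathbb{F}_2[X_1,\ldots,X_\tau]$. Then the Boolean function $g(x)+F(\mathrm{Tr}^n_1(u_1x),\ldots,\mathrm{Tr}^n_1(u_\tau x))$ is bent, with dual $g^*(x)+F(D_{u_1}g^*(x),\ldots,D_{u_\tau}g^*(x))$.
   Context: $\mathrm{Tr}^n_1(x)=\sum_{i=0}^{n-1}x^{2^i}$. For a Boolean function $f$ on $\mathbb{F}_{2^n}$, $W_f(a)=\sum_x(-1)^{f(x)+\mathrm{Tr}^n_1(ax)}$; $f$ is bent if $|W_f(a)|=2^{n/2}$ for all $a$, with dual $f^*$ defined by $W_f(a)=2^{n/2}(-1)^{f^*(a)}$. $D_af(x)=f(x)+f(x+a)$, $D_aD_bf(x)=f(x)+f(x+a)+f(x+b)+f(x+a+b)$. A reduced polynomial in $\mathbb{F}_2[X_1,\ldots,X_\tau]$ is one of the form $\sum_{I\subseteq\{1,\ldots,\tau\}}a_I\prod_{i\in I}X_i$, $a_I\in\mathbb{F}_2$. *)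

theory Defs
  imports Main
begin

definition tr :: "nat \<Rightarrow> 'a::field \<Rightarrow> 'a" where
  "tr n x = (\<Sum>i<n. x ^ (2 ^ i))"

definition trb :: "nat \<Rightarrow> 'a::field \<Rightarrow> bool" where
  "trb n x = (tr n x = 1)"

text \<open>Boolean functions are maps 'a => bool; addition in F_2 is exclusive or (\<noteq>).
  Walsh transform W_f(a) = sum_x (-1)^(f(x) + Tr(ax)).\<close>
definition walsh :: "nat \<Rightarrow> ('a::{finite,field} \<Rightarrow> bool) \<Rightarrow> 'a \<Rightarrow> int" where
  "walsh n f a = (\<Sum>x\<in>UNIV. if f x \<noteq> trb n (a * x) then -1 else 1)"

definition bent :: "nat \<Rightarrow> ('a::{finite,field} \<Rightarrow> bool) \<Rightarrow> bool" where
  "bent n f \<longleftrightarrow> (\<forall>a. \<bar>walsh n f a\<bar> = 2 ^ (n div 2))"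

definition is_dual :: "nat \<Rightarrow> ('a::{finite,field} \<Rightarrow> bool) \<Rightarrow> ('a \<Rightarrow> bool) \<Rightarrow> bool" where
  "is_dual n f fs \<longleftrightarrow> (\<forall>a. walsh n f a = 2 ^ (n div 2) * (if fs a then -1 else 1))"

definition D :: "'a::plus \<Rightarrow> ('a \<Rightarrow> bool) \<Rightarrow> 'a \<Rightarrow> bool" where
  "D a f x = (f x \<noteq> f (x + a))"

text \<open>Reduced polynomial in F_2[X_1..X_tau] given by coefficients c I (I \<subseteq> {1..tau}),
  evaluated at the point xs (xs i = value of X_i): sum over I of c_I * prod_{i\<in>I} X_i in F_2.\<close>
definition reduced_poly_eval :: "nat \<Rightarrow> (nat set \<Rightarrow> bool) \<Rightarrow> (nat \<Rightarrow> bool) \<Rightarrow> bool" where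
  "reduced_poly_eval \<tau> c xs = odd (card {I \<in> Pow {1..\<tau>}. c I \<and> (\<forall>i\<in>I. xs i)})"

end

theory Submission
  imports Defs
begin

lemma char2_add_self:
  fixes x :: "'a::field" assumes "(1::'a) + 1 = 0" shows "x + x = 0"
proof -
  have "x + x = (1 + 1) * x" by (simp add: distrib_right)
  then show ?thesis using assms by simp
qed

lemma frob_sq:
  fixes a b :: "'a::field" assumes "(1::'a) + 1 = 0" shows "(a + b)^2 = a^2 + b^2"
proof -
  have "(a + b)^2 = a^2 + b^2 + (a*b + a*b)" by (simp add: power2_eq_square algebra_simps)
  then show ?thesis using char2_add_self[OF assms, of "a*b"] by simp
qed

lemma frob_pow:
  fixes a b :: "'a::field" assumes "(1::'a) + 1 = 0" shows "(a + b)^(2^i) = a^(2^i) + b^(2^i)"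
proof (induction i)
  case 0 then show ?case by simp
next
  case (Suc i)
  have "(a + b)^(2^Suc i) = ((a + b)^(2^i))^2" by (simp add: power_mult[symmetric] mult.commute)
  also have "\<dots> = (a^(2^i))^2 + (b^(2^i))^2" using Suc frob_sq[OF assms] by simp
  also have "\<dots> = a^(2^Suc i) + b^(2^Suc i)" by (simp add: power_mult[symmetric] mult.commute)
  finally show ?case .
qed

lemma sum_sq:
  fixes f :: "'b \<Rightarrow> 'a::field" assumes "(1::'a) + 1 = 0" and "finite A"
  shows "(\<Sum>i\<in>A. f i)^2 = (\<Sum>i\<in>A. (f i)^2)"
  using assms(2) by (induction A rule: finite_induct) (simp_all add: frob_sq[OF assms(1)])

lemma tr_add:
  fixes x y :: "'a::field" assumes "(1::'a) + 1 = 0"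
  shows "tr n (x + y) = tr n x + tr n y"
  unfolding tr_def by (simp add: frob_pow[OF assms] sum.distrib)

lemma pow_card:
  fixes x :: "'a::{finite,field}"
  shows "x ^ card (UNIV :: 'a set) = x"
proof (cases "x = 0")
  case True
  have "card (UNIV :: 'a set) > 0" by (simp add: finite_UNIV_card_ge_0)
  then show ?thesis using True by simp
next
  case False
  let ?S = "UNIV - {0 :: 'a}"
  have bij: "bij_betw ((*) x) ?S ?S"
  proof (rule bij_betw_imageI)
    show "inj_on ((*) x) ?S" using False by (auto simp: inj_on_def)
    show "(*) x ` ?S = ?S"
    proof
      show "(*) x ` ?S \<subseteq> ?S" using False by auto
      show "?S \<subseteq> (*) x ` ?S"
      proof
        fix z assume "z \<in> ?S"
        then have "z = x * (z / x)" "z / x \<in> ?S" using False by auto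
        then show "z \<in> (*) x ` ?S" by blast
      qed
    qed
  qed
  have "(\<Prod>y\<in>?S. x * y) = (\<Prod>y\<in>?S. y)"
    using prod.reindex_bij_betw[OF bij, of "\<lambda>y. y"] by simp
  moreover have "(\<Prod>y\<in>?S. x * y) = x ^ card ?S * (\<Prod>y\<in>?S. y)"
    by (simp add: prod.distrib)
  moreover have "(\<Prod>y\<in>?S. y) \<noteq> 0" by simp
  ultimately have "x ^ card ?S = 1" by simp
  moreover have "card ?S + 1 = card (UNIV :: 'a set)"
    by (simp add: card_Diff_singleton finite_UNIV_card_ge_0 Suc_leI)
  ultimately show ?thesis by (metis power_Suc2 mult_1 Suc_eq_plus1)
qed

lemma tr_idem:
  fixes x :: "'a::{finite,field}"
  assumes "(1::'a) + 1 = 0" and "card (UNIV :: 'a set) = 2 ^ n"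
  shows "(tr n x)^2 = tr n x"
proof -
  have "(tr n x)^2 = (\<Sum>i<n. x ^ (2 ^ Suc i))"
    unfolding tr_def by (simp add: sum_sq[OF assms(1)] power_mult[symmetric] mult.commute)
  moreover have "(\<Sum>i<Suc n. x ^ (2 ^ i)) = x ^ (2 ^ 0) + (\<Sum>i<n. x ^ (2 ^ Suc i))"
    by (rule sum.lessThan_Suc_shift)
  ultimately have "x + (tr n x)^2 = (\<Sum>i<Suc n. x ^ (2 ^ i))"
    by simp
  also have "\<dots> = tr n x + x ^ (2 ^ n)" by (simp add: tr_def)
  also have "x ^ (2 ^ n) = x" using pow_card[of x] assms(2) by simp
  finally show ?thesis by (simp add: add.commute)
qed

lemma tr_01:
  fixes x :: "'a::{finite,field}"
  assumes "(1::'a) + 1 = 0" and "card (UNIV :: 'a set) = 2 ^ n"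
  shows "tr n x = 0 \<or> tr n x = 1"
proof -
  have "tr n x * (tr n x - 1) = 0" using tr_idem[OF assms, of x]
    by (simp add: power2_eq_square algebra_simps)
  then show ?thesis by simp
qed

lemma trb_add:
  fixes x y :: "'a::{finite,field}"
  assumes "(1::'a) + 1 = 0" and "card (UNIV :: 'a set) = 2 ^ n"
  shows "trb n (x + y) = (trb n x \<noteq> trb n y)"
proof -
  have "(1::'a) \<noteq> 0" by simp
  then show ?thesis
    using tr_01[OF assms, of x] tr_01[OF assms, of y] assms(1)
    unfolding trb_def tr_add[OF assms(1)] by auto
qed

definition chi :: "bool \<Rightarrow> int" where "chi b = (if b then -1 else 1)"

lemma chi_xor: "chi (p \<noteq> q) = chi p * chi q" by (simp add: chi_def)

lemma chi_neq: "chi (p = (\<not> q)) = chi p * chi q" by (simp add: chi_def)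
lemma chi_not: "chi (\<not> p) = - chi p" by (simp add: chi_def)
lemma chi_eq: "chi (p = q) = - (chi p * chi q)" by (simp add: chi_def)
lemma chi_T: "chi True = -1" by (simp add: chi_def)
lemma chi_F: "chi False = 1" by (simp add: chi_def)

lemma walsh_chi: "walsh n f a = (\<Sum>x\<in>UNIV. chi (f x) * chi (trb n (a * x)))"
  unfolding walsh_def chi_def by (rule sum.cong) auto


lemma main_induct:
  fixes g gs :: "'a::{finite,field} \<Rightarrow> bool" and u :: "nat \<Rightarrow> 'a" and K :: int
    and \<Phi> :: "(nat \<Rightarrow> bool) \<Rightarrow> bool"
  assumes tadd: "\<And>x y :: 'a. trb n (x + y) = (trb n x \<noteq> trb n y)"
    and dual: "\<And>b. walsh n g b = K * chi (gs b)"
  shows "(\<forall>i j x. 1 \<le> i \<longrightarrow> i < j \<longrightarrow> j \<le> m \<longrightarrow> D (u i) (D (u j) gs) x = False)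
    \<Longrightarrow> (\<forall>y y'. (\<forall>i\<in>{1..m}. y i = y' i) \<longrightarrow> \<Phi> y = \<Phi> y')
    \<Longrightarrow> walsh n (\<lambda>x. g x \<noteq> \<Phi> (\<lambda>i. trb n (u i * x))) a
        = K * chi (gs a \<noteq> \<Phi> (\<lambda>i. D (u i) gs a))"
proof (induction m arbitrary: \<Phi> a)
  case 0
  have c: "\<Phi> y = \<Phi> (\<lambda>_. False)" for y using 0(2) by auto
  have "walsh n (\<lambda>x. g x \<noteq> \<Phi> (\<lambda>i. trb n (u i * x))) a
      = (\<Sum>x\<in>UNIV. chi (\<Phi> (\<lambda>_. False)) * (chi (g x) * chi (trb n (a * x))))"
    unfolding walsh_chi chi_xor c[of "\<lambda>i. trb n (u i * _)"] by (simp add: mult_ac)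
  also have "\<dots> = chi (\<Phi> (\<lambda>_. False)) * walsh n g a"
    unfolding walsh_chi by (simp add: sum_distrib_left)
  also have "\<dots> = chi (\<Phi> (\<lambda>_. False)) * (K * chi (gs a))" using dual[of a] by simp
  finally have w: "walsh n (\<lambda>x. g x \<noteq> \<Phi> (\<lambda>i. trb n (u i * x))) a
      = chi (\<Phi> (\<lambda>_. False)) * (K * chi (gs a))" .
  have r: "chi (gs a \<noteq> \<Phi> (\<lambda>i. D (u i) gs a)) = chi (gs a) * chi (\<Phi> (\<lambda>_. False))"
    unfolding c[of "\<lambda>i. D (u i) gs a"] chi_xor by (rule refl)
  show ?case unfolding r w by (simp add: mult_ac)
next
  case (Suc m)
  define v where "v = u (Suc m)"
  define \<Phi>0 where "\<Phi>0 y = \<Phi> (y(Suc m := False))" for y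
  define \<Phi>1 where "\<Phi>1 y = \<Phi> (y(Suc m := True))" for y
  have P: "\<forall>i j x. 1 \<le> i \<longrightarrow> i < j \<longrightarrow> j \<le> m \<longrightarrow> D (u i) (D (u j) gs) x = False"
    using Suc.prems(1) by auto
  have dep: "\<forall>y y'. (\<forall>i\<in>{1..m}. y i = y' i) \<longrightarrow> \<Phi> (y(Suc m := b)) = \<Phi> (y'(Suc m := b))" for b
  proof (intro allI impI)
    fix y y' :: "nat \<Rightarrow> bool" assume h: "\<forall>i\<in>{1..m}. y i = y' i"
    show "\<Phi> (y(Suc m := b)) = \<Phi> (y'(Suc m := b))"
    proof -
      have "\<forall>i\<in>{1..Suc m}. (y(Suc m := b)) i = (y'(Suc m := b)) i"
        using h by (auto simp: le_Suc_eq)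
      then show ?thesis using Suc.prems(2) by blast
    qed
  qed
  have dep0: "\<forall>y y'. (\<forall>i\<in>{1..m}. y i = y' i) \<longrightarrow> \<Phi>0 y = \<Phi>0 y'"
    unfolding \<Phi>0_def using dep by blast
  have dep1: "\<forall>y y'. (\<forall>i\<in>{1..m}. y i = y' i) \<longrightarrow> \<Phi>1 y = \<Phi>1 y'"
    unfolding \<Phi>1_def using dep by blast
  note IH0 = Suc.IH[OF P dep0] and IH1 = Suc.IH[OF P dep1]
  have split: "\<Phi> y = (if y (Suc m) then \<Phi>1 y else \<Phi>0 y)" for y
    unfolding \<Phi>0_def \<Phi>1_def by (cases "y (Suc m)") (simp_all add: fun_upd_idem)
  let ?Y = "\<lambda>x i. trb n (u i * x)"
  let ?W0 = "walsh n (\<lambda>x. g x \<noteq> \<Phi>0 (?Y x))"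
  let ?W1 = "walsh n (\<lambda>x. g x \<noteq> \<Phi>1 (?Y x))"
  have pt: "2 * (chi (g x \<noteq> \<Phi> (?Y x)) * chi (trb n (a * x)))
      = chi (g x \<noteq> \<Phi>0 (?Y x)) * chi (trb n (a * x)) + chi (g x \<noteq> \<Phi>1 (?Y x)) * chi (trb n (a * x))
      + chi (g x \<noteq> \<Phi>0 (?Y x)) * chi (trb n ((a + v) * x))
      - chi (g x \<noteq> \<Phi>1 (?Y x)) * chi (trb n ((a + v) * x))" for x
  proof -
    have t: "trb n ((a + v) * x) = (trb n (a * x) \<noteq> trb n (v * x))"
      by (simp only: distrib_right tadd)
    have t': "trb n (a * x + v * x) = (trb n (a * x) \<noteq> trb n (v * x))"
      by (simp only: tadd)
    have s: "\<Phi> (?Y x) = (if trb n (v * x) then \<Phi>1 (?Y x) else \<Phi>0 (?Y x))"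
      using split[of "?Y x"] by (simp add: v_def)
    show ?thesis
    proof (cases "trb n (v * x)")
      case True
      then have "\<Phi> (?Y x) = \<Phi>1 (?Y x)" using s by simp
      then show ?thesis using True by (simp add: t t' chi_xor chi_neq chi_not chi_T chi_F algebra_simps)
    next
      case False
      then have "\<Phi> (?Y x) = \<Phi>0 (?Y x)" using s by simp
      then show ?thesis using False by (simp add: t t' chi_xor chi_neq chi_not chi_T chi_F algebra_simps)
    qed
  qed
  have "2 * walsh n (\<lambda>x. g x \<noteq> \<Phi> (?Y x)) a = ?W0 a + ?W1 a + ?W0 (a + v) - ?W1 (a + v)"
    unfolding walsh_chi sum_distrib_left pt
    by (simp add: sum.distrib sum_subtractf)
  also have "\<dots> = K * chi (gs a \<noteq> \<Phi>0 (\<lambda>i. D (u i) gs a)) + K * chi (gs a \<noteq> \<Phi>1 (\<lambda>i. D (u i) gs a))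
     + K * chi (gs (a + v) \<noteq> \<Phi>0 (\<lambda>i. D (u i) gs (a + v)))
     - K * chi (gs (a + v) \<noteq> \<Phi>1 (\<lambda>i. D (u i) gs (a + v)))"
    using IH0 IH1 by simp
  also have "\<dots> = 2 * (K * chi (gs a \<noteq> \<Phi> (\<lambda>i. D (u i) gs a)))"
  proof -
    have dd: "\<forall>i\<in>{1..m}. D (u i) gs (a + v) = D (u i) gs a"
    proof
      fix i assume i: "i \<in> {1..m}"
      have "D (u i) (D v gs) a = False" using Suc.prems(1) i unfolding v_def by auto
      then show "D (u i) gs (a + v) = D (u i) gs a"
        unfolding D_def by (auto simp: add_ac)
    qed
    have e0: "\<Phi>0 (\<lambda>i. D (u i) gs (a + v)) = \<Phi>0 (\<lambda>i. D (u i) gs a)" using dep0 dd by auto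
    have e1: "\<Phi>1 (\<lambda>i. D (u i) gs (a + v)) = \<Phi>1 (\<lambda>i. D (u i) gs a)" using dep1 dd by auto
    have gv: "gs (a + v) = (gs a \<noteq> D v gs a)" unfolding D_def by auto
    have s: "\<Phi> (\<lambda>i. D (u i) gs a) = (if D v gs a then \<Phi>1 (\<lambda>i. D (u i) gs a) else \<Phi>0 (\<lambda>i. D (u i) gs a))"
      using split[of "\<lambda>i. D (u i) gs a"] by (simp add: v_def)
    show ?thesis
    proof (cases "D v gs a")
      case True
      then have "\<Phi> (\<lambda>i. D (u i) gs a) = \<Phi>1 (\<lambda>i. D (u i) gs a)" using s by simp
      then show ?thesis using True by (simp add: e0 e1 gv chi_eq chi_xor chi_neq chi_not chi_T chi_F algebra_simps)
    next
      case False
      then have "\<Phi> (\<lambda>i. D (u i) gs a) = \<Phi>0 (\<lambda>i. D (u i) gs a)" using s by simp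
      then show ?thesis using False by (simp add: e0 e1 gv chi_eq chi_xor chi_neq chi_not chi_T chi_F algebra_simps)
    qed
  qed
  finally show ?case by simp
qed

theorem theorem4:
  fixes g gs :: "'a::{finite,field} \<Rightarrow> bool"
    and n k \<tau> :: nat and u :: "nat \<Rightarrow> 'a" and c :: "nat set \<Rightarrow> bool"
  assumes field_card: "card (UNIV :: 'a set) = 2 ^ n"
    and char2: "(1::'a) + 1 = 0"
    and n_even: "n = 2 * k"
    and g_bent: "bent n g"
    and g_dual: "is_dual n g gs"
    and u_distinct: "inj_on u {1..\<tau>}"
    and P_tau: "\<And>i j x. 1 \<le> i \<Longrightarrow> i < j \<Longrightarrow> j \<le> \<tau> \<Longrightarrow> D (u i) (D (u j) gs) x = False"
  shows "bent n (\<lambda>x. g x \<noteq> reduced_poly_eval \<tau> c (\<lambda>i. trb n (u i * x)))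
       \<and> is_dual n (\<lambda>x. g x \<noteq> reduced_poly_eval \<tau> c (\<lambda>i. trb n (u i * x)))
                   (\<lambda>x. gs x \<noteq> reduced_poly_eval \<tau> c (\<lambda>i. D (u i) gs x))"
proof -
  let ?K = "2 ^ (n div 2) :: int"
  have tadd: "\<And>x y :: 'a. trb n (x + y) = (trb n x \<noteq> trb n y)"
    by (rule trb_add[OF char2 field_card])
  have dual: "\<And>b. walsh n g b = ?K * chi (gs b)"
    using g_dual unfolding is_dual_def chi_def by simp
  have dep: "\<forall>y y'. (\<forall>i\<in>{1..\<tau>}. y i = y' i) \<longrightarrow> reduced_poly_eval \<tau> c y = reduced_poly_eval \<tau> c y'"
  proof (intro allI impI)
    fix y y' :: "nat \<Rightarrow> bool" assume h: "\<forall>i\<in>{1..\<tau>}. y i = y' i"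
    have "{I \<in> Pow {1..\<tau>}. c I \<and> (\<forall>i\<in>I. y i)} = {I \<in> Pow {1..\<tau>}. c I \<and> (\<forall>i\<in>I. y' i)}"
      using h by blast
    then show "reduced_poly_eval \<tau> c y = reduced_poly_eval \<tau> c y'"
      unfolding reduced_poly_eval_def by simp
  qed
  have P: "\<forall>i j x. 1 \<le> i \<longrightarrow> i < j \<longrightarrow> j \<le> \<tau> \<longrightarrow> D (u i) (D (u j) gs) x = False"
    using P_tau by blast
  have W: "walsh n (\<lambda>x. g x \<noteq> reduced_poly_eval \<tau> c (\<lambda>i. trb n (u i * x))) a
      = ?K * chi (gs a \<noteq> reduced_poly_eval \<tau> c (\<lambda>i. D (u i) gs a))" for a
    using main_induct[of n g ?K gs \<tau> u "reduced_poly_eval \<tau> c", OF tadd dual P dep] .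
  show ?thesis
    unfolding bent_def is_dual_def W by (simp add: chi_def)
qed

end
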